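(* Let $H$ be a Hintikka tree with induced belief $B$. For all sentences $\varphi, \varphi_1, \varphi_2$ of $L$ and every formula $\psi$ whose only free variable is $x$: (1) $B(\lnot \varphi) = 1 - B(\varphi)$; (2) $B(\varphi_1 \land \varphi_2) \leq \min(B(\varphi_1), B(\varphi_2))$; (3) $\max(B(\varphi_1), B(\varphi_2)) \leq B(\varphi_1 \lor \varphi_2)$; (4) $B((\forall x)\psi) \leq \min_{\delta \in \mathrm{dnf}((\exists x)\lnot\psi)} \{1 - B(\delta)\}$; (5) $\max_{\delta \in \mathrm{dnf}((\exists x)\psi)} \{B(\delta)\} \leq B((\exists x)\psi)$.
   Context: $L$ is a first-order language without equality with finitely many predicate symbols and no function or constant symbols. For $d \in \mathbb{N}$, $\Delta^{(d)}$ is the finite set of Hintikka constituents of depth $d$ with no free variables ($\Delta^{(0)} = \{\top\}$); every sentence $\varphi$ of quantifier depth $d$ is logically equivalent to the disjunction of a set $\mathrm{dnf}(\varphi) \subseteq \Delta^{(d)}$ (its Hintikka distributive normal form of depth $d$); each constituent is itself a sentence. $\mathrm{expand}(1,\delta^{(d)})\subseteq\Delta^{(d+1)}$ denotes the expansions of $\delta^{(d)}$. Refinement tree: on $\Delta = \bigcup_d \Delta^{(d)}$ put an edge from each $\delta^{(d)}$ to each member of $\mathrm{expand}(1,\delta^{(d)})$, keeping a constituent lying in several depth-$d$ expansions as child of only one of them. A Hintikka tree is a function $H: \Delta \to [0,1]$ with $H(\delta^{(0)}) = 1$ and $H(\delta) = \sum_{\delta' \text{ child of } \delta} H(\delta')$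 for all $\delta$. Let $\Psi^\omega$ be the set of infinite root paths in the refinement tree with the topology generated by cylinders $[\delta^{(0)}\cdots\delta^{(d)}]$, and $\beta$ the unique Borel probability measure with $\beta([\delta^{(0)}\cdots\delta^{(d)}]) = H(\delta^{(d)})$. The belief in a sentence $\varphi$ of depth $d$ is $B(\varphi) = \sum_{\delta^{(d)} \in \mathrm{dnf}(\varphi)} \beta([\delta^{(0)} \cdots \delta^{(d)}])$, where $\delta^{(0)}\cdots\delta^{(d)}$ is the root path to $\delta^{(d)}$. *)

theory Defs
  imports Complex_Main "HOL-Library.FSet"
begin

datatype 'p fm =
    Tru
  | Fls
  | Atom 'p "nat list"
  | Neg "'p fm"
  | Conj "'p fm" "'p fm"
  | Disj "'p fm" "'p fm"
  | Ex nat "'p fm"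
  | All nat "'p fm"

fun wf_fm :: "('p \<Rightarrow> nat) \<Rightarrow> 'p fm \<Rightarrow> bool" where
  "wf_fm ar Tru = True"
| "wf_fm ar Fls = True"
| "wf_fm ar (Atom p ts) = (length ts = ar p)"
| "wf_fm ar (Neg \<phi>) = wf_fm ar \<phi>"
| "wf_fm ar (Conj \<phi> \<psi>) = (wf_fm ar \<phi> \<and> wf_fm ar \<psi>)"
| "wf_fm ar (Disj \<phi> \<psi>) = (wf_fm ar \<phi> \<and> wf_fm ar \<psi>)"
| "wf_fm ar (Ex x \<phi>) = wf_fm ar \<phi>"
| "wf_fm ar (All x \<phi>) = wf_fm ar \<phi>"

fun fv :: "'p fm \<Rightarrow> nat set" where
  "fv Tru = {}"
| "fv Fls = {}"
| "fv (Atom p ts) = set ts"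
| "fv (Neg \<phi>) = fv \<phi>"
| "fv (Conj \<phi> \<psi>) = fv \<phi> \<union> fv \<psi>"
| "fv (Disj \<phi> \<psi>) = fv \<phi> \<union> fv \<psi>"
| "fv (Ex x \<phi>) = fv \<phi> - {x}"
| "fv (All x \<phi>) = fv \<phi> - {x}"

fun qd :: "'p fm \<Rightarrow> nat" where
  "qd Tru = 0"
| "qd Fls = 0"
| "qd (Atom p ts) = 0"
| "qd (Neg \<phi>) = qd \<phi>"
| "qd (Conj \<phi> \<psi>) = max (qd \<phi>) (qd \<psi>)"
| "qd (Disj \<phi> \<psi>) = max (qd \<phi>) (qd \<psi>)"
| "qd (Ex x \<phi>) = Suc (qd \<phi>)"
| "qd (All x \<phi>) = Suc (qd \<phi>)"

definition is_sentence :: "('p \<Rightarrow> nat) \<Rightarrow> 'p fm \<Rightarrow> bool" where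
  "is_sentence ar \<phi> \<longleftrightarrow> wf_fm ar \<phi> \<and> fv \<phi> = {}"

text \<open>A (attributive) constituent at level k (free variables 0,...,k-1, the newest
  one being k-1) of depth d is represented by Cst A S, where A is the set of
  the positive atoms among the atoms that are new at level k (all other new
  atoms occur negated), and S is the set of constituents of depth d-1 at level
  k+1 that are asserted to exist (and to exhaust all possibilities) for the
  new variable k.\<close>

datatype 'p cst = Cst (catoms: "('p \<times> nat list) fset") (csub: "'p cst fset")

definition newatoms :: "('p \<Rightarrow> nat) \<Rightarrow> nat \<Rightarrow> ('p \<times> nat list) set" where
  "newatoms ar k = {(p, ts). length ts = ar p \<and> set ts \<subseteq> {..<k} \<and> (k = 0 \<or> k - 1 \<in> set ts)}"

fun is_cst :: "('p \<Rightarrow> nat) \<Rightarrow> nat \<Rightarrow> nat \<Rightarrow> 'p cst \<Rightarrow> bool" where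
  "is_cst ar 0 k c \<longleftrightarrow> fset (catoms c) \<subseteq> newatoms ar k \<and> csub c = {||}"
| "is_cst ar (Suc e) k c \<longleftrightarrow> fset (catoms c) \<subseteq> newatoms ar k \<and>
      (\<forall>C \<in> fset (csub c). is_cst ar e (Suc k) C)"

definition Delta :: "('p \<Rightarrow> nat) \<Rightarrow> nat \<Rightarrow> 'p cst set" where
  "Delta ar d = {c. is_cst ar d 0 c}"

definition list_of :: "'a set \<Rightarrow> 'a list" where
  "list_of X = (SOME xs. distinct xs \<and> set xs = X)"

fun bigconj :: "'p fm list \<Rightarrow> 'p fm" where
  "bigconj [] = Tru"
| "bigconj [\<phi>] = \<phi>"
| "bigconj (\<phi> # \<phi>s) = Conj \<phi> (bigconj \<phi>s)"

fun bigdisj :: "'p fm list \<Rightarrow> 'p fm" where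
  "bigdisj [] = Fls"
| "bigdisj [\<phi>] = \<phi>"
| "bigdisj (\<phi> # \<phi>s) = Disj \<phi> (bigdisj \<phi>s)"

definition atom_part :: "('p \<Rightarrow> nat) \<Rightarrow> nat \<Rightarrow> ('p \<times> nat list) fset \<Rightarrow> 'p fm" where
  "atom_part ar k A = bigconj (map (\<lambda>a. if a \<in> fset A then Atom (fst a) (snd a)
                                          else Neg (Atom (fst a) (snd a)))
                                   (list_of (newatoms ar k)))"

fun cst_fm :: "('p \<Rightarrow> nat) \<Rightarrow> nat \<Rightarrow> nat \<Rightarrow> 'p cst \<Rightarrow> 'p fm" where
  "cst_fm ar 0 k c = atom_part ar k (catoms c)"
| "cst_fm ar (Suc e) k c =
     Conj (atom_part ar k (catoms c))
      (Conj (bigconj (map (\<lambda>C. Ex k (cst_fm ar e (Suc k) C)) (list_of (fset (csub c)))))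
            (All k (bigdisj (map (\<lambda>C. cst_fm ar e (Suc k) C) (list_of (fset (csub c)))))))"

fun reduct :: "nat \<Rightarrow> 'p cst \<Rightarrow> 'p cst" where
  "reduct 0 c = Cst (catoms c) {||}"
| "reduct (Suc e) c = Cst (catoms c) (fimage (reduct e) (csub c))"

text \<open>expand(1, \<delta>) for \<delta> in \<Delta>^(d): the depth-(d+1) constituents subordinate to \<delta>.
  These are the children of \<delta> in the refinement tree.\<close>
definition expand1 :: "('p \<Rightarrow> nat) \<Rightarrow> nat \<Rightarrow> 'p cst \<Rightarrow> 'p cst set" where
  "expand1 ar d \<delta> = {\<delta>' \<in> Delta ar (Suc d). reduct d \<delta>' = \<delta>}"

text \<open>Syntactic evaluation of a formula against a constituent of depth d at level k;
  P collects the positive atoms fixed along the path, env maps variable names to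
  positions.  dnf(\<phi>) is the set of depth-qd(\<phi>) constituents in which \<phi> holds.\<close>
fun eval :: "nat \<Rightarrow> nat \<Rightarrow> 'p cst \<Rightarrow> ('p \<times> nat list) set \<Rightarrow> (nat \<Rightarrow> nat) \<Rightarrow> 'p fm \<Rightarrow> bool" where
  "eval d k c P env Tru = True"
| "eval d k c P env Fls = False"
| "eval d k c P env (Atom p ts) = ((p, map env ts) \<in> P)"
| "eval d k c P env (Neg \<phi>) = (\<not> eval d k c P env \<phi>)"
| "eval d k c P env (Conj \<phi> \<psi>) = (eval d k c P env \<phi> \<and> eval d k c P env \<psi>)"
| "eval d k c P env (Disj \<phi> \<psi>) = (eval d k c P env \<phi> \<or> eval d k c P env \<psi>)"
| "eval d k c P env (Ex x \<phi>) = (case d of 0 \<Rightarrow> False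
     | Suc e \<Rightarrow> (\<exists>C \<in> fset (csub c). eval e (Suc k) C (P \<union> fset (catoms C)) (env(x := k)) \<phi>))"
| "eval d k c P env (All x \<phi>) = (case d of 0 \<Rightarrow> False
     | Suc e \<Rightarrow> (\<forall>C \<in> fset (csub c). eval e (Suc k) C (P \<union> fset (catoms C)) (env(x := k)) \<phi>))"

definition dnf :: "('p \<Rightarrow> nat) \<Rightarrow> 'p fm \<Rightarrow> 'p cst set" where
  "dnf ar \<phi> = {\<delta> \<in> Delta ar (qd \<phi>). eval (qd \<phi>) 0 \<delta> (fset (catoms \<delta>)) (\<lambda>_. 0) \<phi>}"

text \<open>H d \<delta> is the value of the Hintikka tree at the node \<delta> \<in> \<Delta>^(d).\<close>
definition hintikka_tree :: "('p \<Rightarrow> nat) \<Rightarrow> (nat \<Rightarrow> 'p cst \<Rightarrow> real) \<Rightarrow> bool" where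
  "hintikka_tree ar H \<longleftrightarrow>
     (\<forall>\<delta> \<in> Delta ar 0. H 0 \<delta> = 1) \<and>
     (\<forall>d. \<forall>\<delta> \<in> Delta ar d. 0 \<le> H d \<delta> \<and> H d \<delta> \<le> 1) \<and>
     (\<forall>d. \<forall>\<delta> \<in> Delta ar d. H d \<delta> = (\<Sum>\<delta>' \<in> expand1 ar d \<delta>. H (Suc d) \<delta>'))"

text \<open>Belief: B(\<phi>) = sum over dnf(\<phi>) of \<beta>([root path to \<delta>]) = sum of H(\<delta>).\<close>
definition belief :: "('p \<Rightarrow> nat) \<Rightarrow> (nat \<Rightarrow> 'p cst \<Rightarrow> real) \<Rightarrow> 'p fm \<Rightarrow> real" where
  "belief ar H \<phi> = (\<Sum>\<delta> \<in> dnf ar \<phi>. H (qd \<phi>) \<delta>)"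

end

theory Submission
  imports Defs
begin


lemma finite_newatoms: "finite (newatoms (ar::'p::finite \<Rightarrow> nat) k)"
proof -
  have "newatoms ar k \<subseteq> (\<Union>p. {p} \<times> {ts. set ts \<subseteq> {..<k} \<and> length ts = ar p})"
    unfolding newatoms_def by auto
  moreover have "finite (\<Union>p::'p. {p} \<times> {ts. set ts \<subseteq> {..<k} \<and> length ts = ar p})"
    by (intro finite_UN_I) (auto intro: finite_lists_length_eq)
  ultimately show ?thesis by (rule finite_subset)
qed

lemma newatoms_disj_lt: "i < j \<Longrightarrow> a \<in> newatoms ar i \<Longrightarrow> a \<notin> newatoms ar j"
proof
  assume ij: "i < j" and a: "a \<in> newatoms ar i" "a \<in> newatoms ar j"
  obtain p ts where pts: "a = (p, ts)" by fastforce
  have "set ts \<subseteq> {..<i}" using a(1) pts unfolding newatoms_def by auto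
  moreover have "j - 1 \<in> set ts" using a(2) ij pts unfolding newatoms_def by auto
  ultimately show False using ij by auto
qed

lemma newatoms_disj: "i \<noteq> j \<Longrightarrow> newatoms ar i \<inter> newatoms ar j = {}"
  using newatoms_disj_lt[of i j _ ar] newatoms_disj_lt[of j i _ ar] by (cases "i < j") auto

lemma finite_fsets: "finite N \<Longrightarrow> finite {A. fset A \<subseteq> N}"
proof -
  assume "finite N"
  have "{A. fset A \<subseteq> N} = fset -` Pow N" by auto
  moreover have "finite (fset -` Pow N)"
    by (rule finite_vimageI) (use \<open>finite N\<close> in \<open>auto simp: inj_def fset_inject\<close>)
  ultimately show ?thesis by simp
qed

lemma finite_cst: "finite {c. is_cst (ar::'p::finite \<Rightarrow> nat) e k c}"
proof (induction e arbitrary: k)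
  case 0
  have "{c. is_cst ar 0 k c} \<subseteq> (\<lambda>A. Cst A {||}) ` {A. fset A \<subseteq> newatoms ar k}"
    by (auto intro!: image_eqI[where x="catoms _"] cst.expand)
  then show ?case using finite_fsets[OF finite_newatoms[of ar k]] by (meson finite_imageI finite_subset)
next
  case (Suc e)
  have "{c. is_cst ar (Suc e) k c} \<subseteq> (\<lambda>(A,B). Cst A B) ` ({A. fset A \<subseteq> newatoms ar k} \<times> {B. fset B \<subseteq> {c. is_cst ar e (Suc k) c}})"
    by (auto intro!: image_eqI[where x="(catoms _, csub _)"])
  moreover have "finite ({A. fset A \<subseteq> newatoms ar k} \<times> {B. fset B \<subseteq> {c. is_cst ar e (Suc k) c}})"
    using finite_fsets[OF finite_newatoms] finite_fsets[OF Suc.IH] by blast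
  ultimately show ?case by (meson finite_imageI finite_subset)
qed

lemma finite_Delta: "finite (Delta (ar::'p::finite \<Rightarrow> nat) d)"
  unfolding Delta_def by (rule finite_cst)

lemma reduct_cst: "is_cst ar (Suc e) k c \<Longrightarrow> is_cst ar e k (reduct e c)"
  by (induction e arbitrary: k c) auto

lemma catoms_reduct[simp]: "catoms (reduct e c) = catoms c"
  by (cases e) auto

lemma eval_reduct: "qd \<phi> \<le> e \<Longrightarrow> eval (Suc e) k c P env \<phi> = eval e k (reduct e c) P env \<phi>"
proof (induction \<phi> arbitrary: e k c P env)
  case (Ex x \<phi>)
  then obtain e' where e: "e = Suc e'" by (cases e) auto
  show ?case using Ex(1)[of e'] Ex(2) by (simp add: e del: fun_upd_apply)
next
  case (All x \<phi>)
  then obtain e' where e: "e = Suc e'" by (cases e) auto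
  show ?case using All(1)[of e'] All(2) by (simp add: e del: fun_upd_apply)
qed auto



fun R :: "nat \<Rightarrow> nat \<Rightarrow> 'p cst \<Rightarrow> 'p cst" where
  "R d 0 \<delta> = \<delta>"
| "R d (Suc m) \<delta> = R d m (reduct (d+m) \<delta>)"

lemma reduct_Delta: "\<delta> \<in> Delta ar (Suc e) \<Longrightarrow> reduct e \<delta> \<in> Delta ar e"
  unfolding Delta_def mem_Collect_eq by (rule reduct_cst)

lemma R_Delta: "\<delta> \<in> Delta ar (d+m) \<Longrightarrow> R d m \<delta> \<in> Delta ar d"
proof (induction m arbitrary: \<delta>)
  case (Suc m)
  have "\<delta> \<in> Delta ar (Suc (d+m))" using Suc.prems by (simp only: add_Suc_right)
  then show ?case using Suc.IH reduct_Delta by (metis R.simps(2))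
qed simp

lemma R_catoms[simp]: "catoms (R d m \<delta>) = catoms \<delta>"
  by (induction m arbitrary: \<delta>) auto

lemma eval_R: "qd \<phi> \<le> d \<Longrightarrow> eval (d+m) k \<delta> P env \<phi> = eval d k (R d m \<delta>) P env \<phi>"
proof (induction m arbitrary: \<delta>)
  case (Suc m)
  have "eval (d + Suc m) k \<delta> P env \<phi> = eval (d+m) k (reduct (d+m) \<delta>) P env \<phi>"
    using eval_reduct[of \<phi> "d+m"] Suc.prems by simp
  then show ?case using Suc by simp
qed simp

lemma tree_sum:
  fixes ar :: "'p::finite \<Rightarrow> nat"
  assumes H: "hintikka_tree ar H" and S: "S \<subseteq> Delta ar d"
  shows "sum (H d) S = sum (H (d+m)) {\<delta>\<in>Delta ar (d+m). R d m \<delta> \<in> S}"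
proof (induction m)
  case 0
  then show ?case using S by (simp add: Int_absorb1 Collect_conj_eq[symmetric]) (metis (no_types, lifting) Collect_mem_eq Collect_cong subsetD S)
next
  case (Suc m)
  define T where "T = {\<delta>\<in>Delta ar (d+m). R d m \<delta> \<in> S}"
  have "sum (H d) S = sum (H (d+m)) T" using Suc T_def by simp
  also have "\<dots> = (\<Sum>\<delta>\<in>T. \<Sum>\<delta>'\<in>expand1 ar (d+m) \<delta>. H (Suc (d+m)) \<delta>')"
    using H unfolding hintikka_tree_def T_def by (intro sum.cong) auto
  also have "\<dots> = (\<Sum>\<delta>\<in>T. \<Sum>\<delta>'\<in>{x. x \<in> {\<delta>''\<in>Delta ar (Suc (d+m)). reduct (d+m) \<delta>'' \<in> T} \<and> reduct (d+m) x = \<delta>}. H (Suc (d+m)) \<delta>')"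
    unfolding expand1_def by (intro sum.cong) auto
  also have "\<dots> = sum (H (Suc (d+m))) {\<delta>''\<in>Delta ar (Suc (d+m)). reduct (d+m) \<delta>'' \<in> T}"
    by (rule sum.group) (auto simp: T_def finite_Delta)
  also have "{\<delta>''\<in>Delta ar (Suc (d+m)). reduct (d+m) \<delta>'' \<in> T} = {\<delta>\<in>Delta ar (d + Suc m). R d (Suc m) \<delta> \<in> S}"
    unfolding T_def by (auto intro: reduct_Delta)
  finally show ?case by simp
qed

lemma Delta0:
  assumes "\<forall>p. 0 < ar p"
  shows "Delta ar 0 = {Cst {||} {||}}"
proof -
  have "newatoms ar 0 = {}"
  proof (rule ccontr)
    assume "newatoms ar 0 \<noteq> {}"
    then obtain p ts where "(p, ts) \<in> newatoms ar 0" by auto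
    then have "ts = []" "length ts = ar p" unfolding newatoms_def by auto
    then show False using assms by (metis less_irrefl list.size(3))
  qed
  then show ?thesis unfolding Delta_def by (auto intro: cst.expand)
qed

lemma sum_Delta:
  fixes ar :: "'p::finite \<Rightarrow> nat"
  assumes "\<forall>p. 0 < ar p" and H: "hintikka_tree ar H"
  shows "sum (H D) (Delta ar D) = 1"
proof -
  have "sum (H 0) (Delta ar 0) = sum (H (0+D)) {\<delta>\<in>Delta ar (0+D). R 0 D \<delta> \<in> Delta ar 0}"
    by (rule tree_sum[OF H]) simp
  also have "{\<delta>\<in>Delta ar (0+D). R 0 D \<delta> \<in> Delta ar 0} = Delta ar D"
    using R_Delta[of _ ar 0 D] by auto
  finally have "sum (H D) (Delta ar D) = sum (H 0) (Delta ar 0)" by simp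
  also have "\<dots> = 1" using H Delta0[OF assms(1)] unfolding hintikka_tree_def by simp
  finally show ?thesis .
qed

definition Bel where
  "Bel ar H D \<phi> = sum (H D) {\<delta>\<in>Delta ar D. eval D 0 \<delta> (fset (catoms \<delta>)) (\<lambda>_. 0) \<phi>}"

lemma belief_Bel:
  fixes ar :: "'p::finite \<Rightarrow> nat"
  assumes H: "hintikka_tree ar H" and le: "qd \<phi> \<le> D"
  shows "belief ar H \<phi> = Bel ar H D \<phi>"
proof -
  define d where "d = qd \<phi>"
  define m where "m = D - d"
  have D: "D = d + m" using le by (simp add: d_def m_def)
  have "belief ar H \<phi> = sum (H (d+m)) {\<delta>\<in>Delta ar (d+m). R d m \<delta> \<in> dnf ar \<phi>}"
    unfolding belief_def d_def by (rule tree_sum[OF H]) (auto simp: dnf_def)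
  also have "{\<delta>\<in>Delta ar (d+m). R d m \<delta> \<in> dnf ar \<phi>} = {\<delta>\<in>Delta ar (d+m). eval (d+m) 0 \<delta> (fset (catoms \<delta>)) (\<lambda>_. 0) \<phi>}"
    using R_Delta[of _ ar d m] eval_R[of \<phi> d m] unfolding dnf_def d_def by auto
  finally show ?thesis unfolding Bel_def D .
qed



lemma set_list_of: "finite X \<Longrightarrow> set (list_of X) = X"
  unfolding list_of_def using finite_distinct_list[of X] by (metis (mono_tags, lifting) someI_ex)

lemma eval_bigconj: "eval d k c P env (bigconj xs) \<longleftrightarrow> (\<forall>\<phi>\<in>set xs. eval d k c P env \<phi>)"
  by (induction xs rule: bigconj.induct) auto

lemma eval_bigdisj: "eval d k c P env (bigdisj xs) \<longleftrightarrow> (\<exists>\<phi>\<in>set xs. eval d k c P env \<phi>)"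
  by (induction xs rule: bigdisj.induct) auto

lemma qd_bigconj: "(\<forall>\<phi>\<in>set xs. qd \<phi> \<le> n) \<Longrightarrow> qd (bigconj xs) \<le> n"
  by (induction xs rule: bigconj.induct) auto

lemma qd_bigdisj: "(\<forall>\<phi>\<in>set xs. qd \<phi> \<le> n) \<Longrightarrow> qd (bigdisj xs) \<le> n"
  by (induction xs rule: bigdisj.induct) auto

lemma qd_atom_part: "qd (atom_part ar k A) = 0"
  unfolding atom_part_def by (rule le_0_eq[THEN iffD1], rule qd_bigconj) auto

lemma qd_cst_fm: "qd (cst_fm ar e k c) \<le> e"
proof (induction e arbitrary: k c)
  case 0
  then show ?case by (simp add: qd_atom_part)
next
  case (Suc e)
  have "qd (bigconj (map (\<lambda>C. Ex k (cst_fm ar e (Suc k) C)) (list_of (fset (csub c))))) \<le> Suc e"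
    by (rule qd_bigconj) (auto simp: Suc.IH)
  moreover have "qd (bigdisj (map (\<lambda>C. cst_fm ar e (Suc k) C) (list_of (fset (csub c))))) \<le> e"
    by (rule qd_bigdisj) (auto simp: Suc.IH)
  ultimately show ?case by (simp add: qd_atom_part)
qed

lemma eval_atom_part:
  fixes ar :: "'p::finite \<Rightarrow> nat"
  assumes "\<forall>j<k. env j = j"
  shows "eval d k c P env (atom_part ar k A) \<longleftrightarrow> (\<forall>a\<in>newatoms ar k. a \<in> fset A \<longleftrightarrow> a \<in> P)"
proof -
  have me: "map env ts = ts" if "(p, ts) \<in> newatoms ar k" for p ts
  proof -
    have "set ts \<subseteq> {..<k}" using that unfolding newatoms_def by auto
    then show ?thesis using assms by (induction ts) auto
  qed
  have "eval d k c P env (atom_part ar k A) \<longleftrightarrow> (\<forall>a\<in>newatoms ar k. eval d k c P env (if a |\<in>| A then Atom (fst a) (snd a) else Neg (Atom (fst a) (snd a))))"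
    unfolding atom_part_def eval_bigconj set_map set_list_of[OF finite_newatoms] by blast
  also have "\<dots> \<longleftrightarrow> (\<forall>a\<in>newatoms ar k. a \<in> fset A \<longleftrightarrow> a \<in> P)"
    by (intro ball_cong) (auto simp: me split: prod.splits)
  finally show ?thesis .
qed

lemma aux_set: "A \<subseteq> N \<Longrightarrow> P \<inter> N = B \<Longrightarrow> (\<forall>a\<in>N. a\<in>A \<longleftrightarrow> a\<in>P) \<longleftrightarrow> A = B"
  by blast



lemma is_cst_catoms: "is_cst ar e k c \<Longrightarrow> fset (catoms c) \<subseteq> newatoms ar k"
  by (cases e) auto

lemma eval_cst_fm:
  fixes ar :: "'p::finite \<Rightarrow> nat"
  assumes "is_cst ar e k c" "is_cst ar e k c'" "\<forall>j<k. env j = j"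
    "P \<inter> newatoms ar k = fset (catoms c')" "\<forall>j>k. P \<inter> newatoms ar j = {}"
  shows "eval e k c' P env (cst_fm ar e k c) \<longleftrightarrow> c' = c"
  using assms
proof (induction e arbitrary: k c c' P env)
  case 0
  have "eval 0 k c' P env (cst_fm ar 0 k c) \<longleftrightarrow> fset (catoms c) = fset (catoms c')"
    using 0 by (simp add: eval_atom_part aux_set)
  then show ?case using 0 by (auto intro: cst.expand simp: fset_inject)
next
  case (Suc e)
  have A: "eval (Suc e) k c' P env (atom_part ar k (catoms c)) \<longleftrightarrow> fset (catoms c) = fset (catoms c')"
    using Suc.prems by (simp add: eval_atom_part aux_set)
  have IH: "eval e (Suc k) C' (P \<union> fset (catoms C')) (env(k := k)) (cst_fm ar e (Suc k) C) \<longleftrightarrow> C' = C"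
    if "C \<in> fset (csub c)" "C' \<in> fset (csub c')" for C C'
  proof (rule Suc.IH)
    show "is_cst ar e (Suc k) C" using that Suc.prems by auto
    show cC: "is_cst ar e (Suc k) C'" using that Suc.prems by auto
    show "\<forall>j<Suc k. (env(k := k)) j = j" using Suc.prems by auto
    have sub: "fset (catoms C') \<subseteq> newatoms ar (Suc k)" using cC by (rule is_cst_catoms)
    show "(P \<union> fset (catoms C')) \<inter> newatoms ar (Suc k) = fset (catoms C')"
      using sub Suc.prems(5) by auto
    show "\<forall>j>Suc k. (P \<union> fset (catoms C')) \<inter> newatoms ar j = {}"
    proof (intro allI impI)
      fix j assume j: "Suc k < j"
      then have "P \<inter> newatoms ar j = {}" using Suc.prems(5) by simp
      moreover have "newatoms ar (Suc k) \<inter> newatoms ar j = {}" by (rule newatoms_disj) (use j in simp)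
      ultimately show "(P \<union> fset (catoms C')) \<inter> newatoms ar j = {}" using sub by blast
    qed
  qed
  let ?ev = "\<lambda>C' C. eval e (Suc k) C' (P \<union> fset (catoms C')) (env(k := k)) (cst_fm ar e (Suc k) C)"
  have B: "eval (Suc e) k c' P env (bigconj (map (\<lambda>C. Ex k (cst_fm ar e (Suc k) C)) (list_of (fset (csub c)))))
     \<longleftrightarrow> (\<forall>C\<in>fset (csub c). \<exists>C'\<in>fset (csub c'). ?ev C' C)"
    by (simp add: eval_bigconj set_list_of)
  have D: "eval (Suc e) k c' P env (All k (bigdisj (map (\<lambda>C. cst_fm ar e (Suc k) C) (list_of (fset (csub c))))))
     \<longleftrightarrow> (\<forall>C'\<in>fset (csub c'). \<exists>C\<in>fset (csub c). ?ev C' C)"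
    by (simp add: eval_bigdisj set_list_of)
  have "eval (Suc e) k c' P env (cst_fm ar (Suc e) k c) \<longleftrightarrow>
     fset (catoms c) = fset (catoms c') \<and> (\<forall>C\<in>fset (csub c). \<exists>C'\<in>fset (csub c'). ?ev C' C) \<and>
     (\<forall>C'\<in>fset (csub c'). \<exists>C\<in>fset (csub c). ?ev C' C)"
    by (simp only: cst_fm.simps eval.simps(5) A B D)
  also have "\<dots> \<longleftrightarrow> fset (catoms c) = fset (catoms c') \<and> fset (csub c) \<subseteq> fset (csub c') \<and> fset (csub c') \<subseteq> fset (csub c)"
    using IH by blast
  also have "\<dots> \<longleftrightarrow> c' = c"
    by (metis cst.expand fset_inject subset_antisym order_refl)
  finally show ?case .
qed



lemma belief_cst:
  fixes ar :: "'p::finite \<Rightarrow> nat"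
  assumes H: "hintikka_tree ar H" and \<delta>: "\<delta> \<in> Delta ar D"
  shows "belief ar H (cst_fm ar D 0 \<delta>) = H D \<delta>"
proof -
  have "belief ar H (cst_fm ar D 0 \<delta>) = Bel ar H D (cst_fm ar D 0 \<delta>)"
    by (rule belief_Bel[OF H qd_cst_fm])
  also have "{\<delta>'\<in>Delta ar D. eval D 0 \<delta>' (fset (catoms \<delta>')) (\<lambda>_. 0) (cst_fm ar D 0 \<delta>)} = {\<delta>}"
  proof -
    have "eval D 0 \<delta>' (fset (catoms \<delta>')) (\<lambda>_. 0) (cst_fm ar D 0 \<delta>) \<longleftrightarrow> \<delta>' = \<delta>"
      if d': "\<delta>' \<in> Delta ar D" for \<delta>'
    proof (rule eval_cst_fm)
      show "is_cst ar D 0 \<delta>" "is_cst ar D 0 \<delta>'" using \<delta> d' by (auto simp: Delta_def)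
      then have sub: "fset (catoms \<delta>') \<subseteq> newatoms ar 0" using is_cst_catoms by blast
      show "\<forall>j<(0::nat). (0::nat) = j" by auto
      show "fset (catoms \<delta>') \<inter> newatoms ar 0 = fset (catoms \<delta>')" using sub by blast
      show "\<forall>j>0. fset (catoms \<delta>') \<inter> newatoms ar j = {}"
      proof (intro allI impI)
        fix j :: nat assume "0 < j"
        then have "newatoms ar 0 \<inter> newatoms ar j = {}" by (intro newatoms_disj) simp
        then show "fset (catoms \<delta>') \<inter> newatoms ar j = {}" using sub by blast
      qed
    qed
    then show ?thesis using \<delta> by auto
  qed
  then have "Bel ar H D (cst_fm ar D 0 \<delta>) = H D \<delta>" unfolding Bel_def by simp
  finally show ?thesis .
qed

theorem mainTheorem6:
  fixes ar :: "'p::finite \<Rightarrow> nat" and H :: "nat \<Rightarrow> 'p cst \<Rightarrow> real"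
  assumes arity_pos: "\<forall>p. 0 < ar p"
    and H: "hintikka_tree ar H"
  shows
   "(\<forall>\<phi>. is_sentence ar \<phi> \<longrightarrow> belief ar H (Neg \<phi>) = 1 - belief ar H \<phi>) \<and>
    (\<forall>\<phi>1 \<phi>2. is_sentence ar \<phi>1 \<and> is_sentence ar \<phi>2 \<longrightarrow>
        belief ar H (Conj \<phi>1 \<phi>2) \<le> min (belief ar H \<phi>1) (belief ar H \<phi>2)) \<and>
    (\<forall>\<phi>1 \<phi>2. is_sentence ar \<phi>1 \<and> is_sentence ar \<phi>2 \<longrightarrow>
        max (belief ar H \<phi>1) (belief ar H \<phi>2) \<le> belief ar H (Disj \<phi>1 \<phi>2)) \<and>
    (\<forall>\<psi> x. wf_fm ar \<psi> \<and> fv \<psi> = {x} \<and> dnf ar (Ex x (Neg \<psi>)) \<noteq> {} \<longrightarrow>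
        belief ar H (All x \<psi>) \<le>
          Min ((\<lambda>\<delta>. 1 - belief ar H (cst_fm ar (qd (Ex x (Neg \<psi>))) 0 \<delta>))
                 ` dnf ar (Ex x (Neg \<psi>)))) \<and>
    (\<forall>\<psi> x. wf_fm ar \<psi> \<and> fv \<psi> = {x} \<and> dnf ar (Ex x \<psi>) \<noteq> {} \<longrightarrow>
        Max ((\<lambda>\<delta>. belief ar H (cst_fm ar (qd (Ex x \<psi>)) 0 \<delta>)) ` dnf ar (Ex x \<psi>))
          \<le> belief ar H (Ex x \<psi>))"
proof -
  have nn: "\<And>D \<delta>. \<delta> \<in> Delta ar D \<Longrightarrow> 0 \<le> H D \<delta>" using H unfolding hintikka_tree_def by blast
  have fin: "\<And>D P. finite {\<delta>\<in>Delta ar D. P \<delta>}" using finite_Delta[of ar] by simp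
  have mono: "Bel ar H D \<phi> \<le> Bel ar H D \<phi>'"
    if "\<And>\<delta>. \<delta> \<in> Delta ar D \<Longrightarrow> eval D 0 \<delta> (fset (catoms \<delta>)) (\<lambda>_. 0) \<phi> \<Longrightarrow> eval D 0 \<delta> (fset (catoms \<delta>)) (\<lambda>_. 0) \<phi>'"
    for D \<phi> \<phi>'
    unfolding Bel_def by (rule sum_mono2[OF fin]) (use that nn in auto)
  have compl: "Bel ar H D \<phi> = 1 - Bel ar H D \<phi>'"
    if "\<And>\<delta>. \<delta> \<in> Delta ar D \<Longrightarrow> eval D 0 \<delta> (fset (catoms \<delta>)) (\<lambda>_. 0) \<phi> \<longleftrightarrow> \<not> eval D 0 \<delta> (fset (catoms \<delta>)) (\<lambda>_. 0) \<phi>'"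
    for D \<phi> \<phi>'
  proof -
    have "{\<delta>\<in>Delta ar D. eval D 0 \<delta> (fset (catoms \<delta>)) (\<lambda>_. 0) \<phi>} = Delta ar D - {\<delta>\<in>Delta ar D. eval D 0 \<delta> (fset (catoms \<delta>)) (\<lambda>_. 0) \<phi>'}"
      using that by auto
    then show ?thesis unfolding Bel_def
      by (simp add: sum_diff finite_Delta sum_Delta[OF arity_pos H])
  qed
  have P1: "belief ar H (Neg \<phi>) = 1 - belief ar H \<phi>" for \<phi>
    using belief_Bel[OF H, of "Neg \<phi>" "qd \<phi>"] belief_Bel[OF H, of \<phi> "qd \<phi>"] compl[of "qd \<phi>" "Neg \<phi>" \<phi>] by simp
  have P2: "belief ar H (Conj \<phi>1 \<phi>2) \<le> min (belief ar H \<phi>1) (belief ar H \<phi>2)" for \<phi>1 \<phi>2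
  proof -
    let ?D = "qd (Conj \<phi>1 \<phi>2)"
    have "belief ar H (Conj \<phi>1 \<phi>2) = Bel ar H ?D (Conj \<phi>1 \<phi>2)" by (rule belief_Bel[OF H]) simp
    moreover have "belief ar H \<phi>1 = Bel ar H ?D \<phi>1" by (rule belief_Bel[OF H]) simp
    moreover have "belief ar H \<phi>2 = Bel ar H ?D \<phi>2" by (rule belief_Bel[OF H]) simp
    moreover have "Bel ar H ?D (Conj \<phi>1 \<phi>2) \<le> Bel ar H ?D \<phi>1" by (rule mono) simp
    moreover have "Bel ar H ?D (Conj \<phi>1 \<phi>2) \<le> Bel ar H ?D \<phi>2" by (rule mono) simp
    ultimately show ?thesis by simp
  qed
  have P3: "max (belief ar H \<phi>1) (belief ar H \<phi>2) \<le> belief ar H (Disj \<phi>1 \<phi>2)" for \<phi>1 \<phi>2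
  proof -
    let ?D = "qd (Disj \<phi>1 \<phi>2)"
    have "belief ar H (Disj \<phi>1 \<phi>2) = Bel ar H ?D (Disj \<phi>1 \<phi>2)" by (rule belief_Bel[OF H]) simp
    moreover have "belief ar H \<phi>1 = Bel ar H ?D \<phi>1" by (rule belief_Bel[OF H]) simp
    moreover have "belief ar H \<phi>2 = Bel ar H ?D \<phi>2" by (rule belief_Bel[OF H]) simp
    moreover have "Bel ar H ?D \<phi>1 \<le> Bel ar H ?D (Disj \<phi>1 \<phi>2)" by (rule mono) simp
    moreover have "Bel ar H ?D \<phi>2 \<le> Bel ar H ?D (Disj \<phi>1 \<phi>2)" by (rule mono) simp
    ultimately show ?thesis by simp
  qed
  have dnfBel: "belief ar H \<phi> = sum (H (qd \<phi>)) (dnf ar \<phi>)" for \<phi> unfolding belief_def ..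
  have dnf_eq: "dnf ar \<phi> = {\<delta>\<in>Delta ar (qd \<phi>). eval (qd \<phi>) 0 \<delta> (fset (catoms \<delta>)) (\<lambda>_. 0) \<phi>}" for \<phi>
    unfolding dnf_def ..
  have fin_dnf: "finite (dnf ar \<phi>)" for \<phi> unfolding dnf_def using fin .
  have single: "H (qd \<phi>) \<delta> \<le> belief ar H \<phi>" if "\<delta> \<in> dnf ar \<phi>" for \<phi> \<delta>
    unfolding belief_def
    by (rule member_le_sum[OF that _ fin_dnf]) (use nn in \<open>auto simp: dnf_def\<close>)
  have P4: "belief ar H (All x \<psi>) \<le>
          Min ((\<lambda>\<delta>. 1 - belief ar H (cst_fm ar (qd (Ex x (Neg \<psi>))) 0 \<delta>)) ` dnf ar (Ex x (Neg \<psi>)))"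
    if ne: "dnf ar (Ex x (Neg \<psi>)) \<noteq> {}" for x \<psi>
  proof (rule Min.boundedI)
    show "finite ((\<lambda>\<delta>. 1 - belief ar H (cst_fm ar (qd (Ex x (Neg \<psi>))) 0 \<delta>)) ` dnf ar (Ex x (Neg \<psi>)))"
      using fin_dnf by simp
    show "(\<lambda>\<delta>. 1 - belief ar H (cst_fm ar (qd (Ex x (Neg \<psi>))) 0 \<delta>)) ` dnf ar (Ex x (Neg \<psi>)) \<noteq> {}"
      using ne by simp
    let ?D = "Suc (qd \<psi>)"
    have "belief ar H (All x \<psi>) = Bel ar H ?D (All x \<psi>)" by (rule belief_Bel[OF H]) simp
    also have "\<dots> = 1 - Bel ar H ?D (Ex x (Neg \<psi>))" by (rule compl) simp
    also have "Bel ar H ?D (Ex x (Neg \<psi>)) = belief ar H (Ex x (Neg \<psi>))" by (rule belief_Bel[OF H, symmetric]) simp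
    finally have eq: "belief ar H (All x \<psi>) = 1 - belief ar H (Ex x (Neg \<psi>))" .
    fix a assume "a \<in> (\<lambda>\<delta>. 1 - belief ar H (cst_fm ar (qd (Ex x (Neg \<psi>))) 0 \<delta>)) ` dnf ar (Ex x (Neg \<psi>))"
    then obtain \<delta> where \<delta>: "\<delta> \<in> dnf ar (Ex x (Neg \<psi>))" and a: "a = 1 - belief ar H (cst_fm ar (qd (Ex x (Neg \<psi>))) 0 \<delta>)" by blast
    have "belief ar H (cst_fm ar (qd (Ex x (Neg \<psi>))) 0 \<delta>) = H (qd (Ex x (Neg \<psi>))) \<delta>"
      by (rule belief_cst[OF H]) (use \<delta> in \<open>simp add: dnf_def\<close>)
    then show "belief ar H (All x \<psi>) \<le> a" using a eq single[OF \<delta>] by simp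
  qed
  have P5: "Max ((\<lambda>\<delta>. belief ar H (cst_fm ar (qd (Ex x \<psi>)) 0 \<delta>)) ` dnf ar (Ex x \<psi>)) \<le> belief ar H (Ex x \<psi>)"
    if ne: "dnf ar (Ex x \<psi>) \<noteq> {}" for x \<psi>
  proof (rule Max.boundedI)
    show "finite ((\<lambda>\<delta>. belief ar H (cst_fm ar (qd (Ex x \<psi>)) 0 \<delta>)) ` dnf ar (Ex x \<psi>))"
      using fin_dnf by simp
    show "(\<lambda>\<delta>. belief ar H (cst_fm ar (qd (Ex x \<psi>)) 0 \<delta>)) ` dnf ar (Ex x \<psi>) \<noteq> {}"
      using ne by simp
    fix a assume "a \<in> (\<lambda>\<delta>. belief ar H (cst_fm ar (qd (Ex x \<psi>)) 0 \<delta>)) ` dnf ar (Ex x \<psi>)"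
    then obtain \<delta> where \<delta>: "\<delta> \<in> dnf ar (Ex x \<psi>)" and a: "a = belief ar H (cst_fm ar (qd (Ex x \<psi>)) 0 \<delta>)" by blast
    have "belief ar H (cst_fm ar (qd (Ex x \<psi>)) 0 \<delta>) = H (qd (Ex x \<psi>)) \<delta>"
      by (rule belief_cst[OF H]) (use \<delta> in \<open>simp add: dnf_def\<close>)
    then show "a \<le> belief ar H (Ex x \<psi>)" using a single[OF \<delta>] by simp
  qed
  show ?thesis using P1 P2 P3 P4 P5 by blast
qed

end
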